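(* Let $M$ be a triangulated compact 3-manifold, possibly with boundary, with $t$ tetrahedra, and let $\mathcal{C}_M\subset\mathbb{R}^{7t}$ be its Haken normal cone. (1) $\mathcal{C}_M$ has at most $2^{7t}$ minimal vertex solutions. (2) The minimal Hilbert basis of $\mathcal{C}_M$ has at most $t^{7t}\,2^{49t^2+14t}$ elements.
   Context: Coordinates of $\mathbb{R}^{7t}$ are indexed by pairs (tetrahedron, elementary normal disk type), with 7 types per tetrahedron (4 triangle types separating one vertex from three, 3 quadrilateral types separating two vertices from two). The Haken normal cone $\mathcal{C}_M$ consists of the $v$ with all $v_i\ge0$ satisfying the matching equations: for each face shared by two tetrahedra and each pair of sides of that face, the sum of the coordinates of disk types in one tetrahedron meeting the face in an arc joining that pair of sides equals the corresponding sum in the other tetrahedron. A minimal vertex solution is the smallest nonzero integer point on an extreme ray of $\mathcal{C}_M$. The minimal Hilbert basis is the set of nonzero $v\in\mathcal{C}_M\cap\mathbb{Z}^{7t}$ not expressible as a sum of two nonzero elements of $\mathcal{C}_M\cap\mathbb{Z}^{7t}$. *)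

theory Defs
  imports Complex_Main
begin

(* Tetrahedra are numbered 0..<t, vertices of each tetrahedron 0..<4.
   Face f of a tetrahedron (f < 4) is the face opposite vertex f.
   gl i f = Some (j, s) : face f of tetrahedron i is glued to face (s f)
   of tetrahedron j, vertex k of tetrahedron i (k <> f) going to vertex s k
   of tetrahedron j.  gl i f = None : face f of tetrahedron i is a
   boundary face.
   --------------------------------------------------------------------- *)

type_synonym gluing = "nat \<Rightarrow> nat \<Rightarrow> (nat \<times> (nat \<Rightarrow> nat)) option"

definition valid_gluing :: "nat \<Rightarrow> gluing \<Rightarrow> bool" where
  "valid_gluing t gl \<longleftrightarrow>
     (\<forall>i<t. \<forall>f<4. \<forall>j s. gl i f = Some (j, s) \<longrightarrow>
        j < t \<and> bij_betw s {..<4} {..<4} \<and> (j, s f) \<noteq> (i, f) \<and>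
        (\<exists>r. gl j (s f) = Some (i, r) \<and> (\<forall>k<4. r (s k) = k)))"

definition vstep :: "nat \<Rightarrow> gluing \<Rightarrow> nat \<times> nat \<Rightarrow> nat \<times> nat \<Rightarrow> bool" where
  "vstep t gl x y \<longleftrightarrow> (case x of (i, a) \<Rightarrow> case y of (j, b) \<Rightarrow>
      i < t \<and> a < 4 \<and> (\<exists>f<4. \<exists>s. f \<noteq> a \<and> gl i f = Some (j, s) \<and> s a = b))"

definition vert_eq :: "nat \<Rightarrow> gluing \<Rightarrow> nat \<times> nat \<Rightarrow> nat \<times> nat \<Rightarrow> bool" where
  "vert_eq t gl = (symclp (vstep t gl))\<^sup>*\<^sup>*"

(* identification of oriented edges (tetrahedron, from-vertex, to-vertex);
   these are also the vertices of the vertex links *)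
definition estep :: "nat \<Rightarrow> gluing \<Rightarrow> nat \<times> nat \<times> nat \<Rightarrow> nat \<times> nat \<times> nat \<Rightarrow> bool" where
  "estep t gl x y \<longleftrightarrow> (case x of (i, a, b) \<Rightarrow> case y of (j, c, d) \<Rightarrow>
      i < t \<and> a < 4 \<and> b < 4 \<and> a \<noteq> b \<and>
      (\<exists>f<4. \<exists>s. f \<noteq> a \<and> f \<noteq> b \<and> gl i f = Some (j, s) \<and> s a = c \<and> s b = d))"

definition edge_eq :: "nat \<Rightarrow> gluing \<Rightarrow> nat \<times> nat \<times> nat \<Rightarrow> nat \<times> nat \<times> nat \<Rightarrow> bool" where
  "edge_eq t gl = (symclp (estep t gl))\<^sup>*\<^sup>*"

(* identification of edges of vertex links: (tetrahedron, corner vertex b,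
   face f with f <> b) is the edge of the link triangle at corner b lying
   in face f *)
definition lestep :: "nat \<Rightarrow> gluing \<Rightarrow> nat \<times> nat \<times> nat \<Rightarrow> nat \<times> nat \<times> nat \<Rightarrow> bool" where
  "lestep t gl x y \<longleftrightarrow> (case x of (i, b, f) \<Rightarrow> case y of (j, c, g) \<Rightarrow>
      i < t \<and> b < 4 \<and> f < 4 \<and> b \<noteq> f \<and>
      (\<exists>s. gl i f = Some (j, s) \<and> s b = c \<and> s f = g))"

definition ledge_eq :: "nat \<Rightarrow> gluing \<Rightarrow> nat \<times> nat \<times> nat \<Rightarrow> nat \<times> nat \<times> nat \<Rightarrow> bool" where
  "ledge_eq t gl = (symclp (lestep t gl))\<^sup>*\<^sup>*"

definition link_triangles :: "nat \<Rightarrow> gluing \<Rightarrow> nat \<times> nat \<Rightarrow> (nat \<times> nat) set" where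
  "link_triangles t gl v = {(j, b). j < t \<and> b < 4 \<and> vert_eq t gl v (j, b)}"

definition link_vertices :: "nat \<Rightarrow> gluing \<Rightarrow> nat \<times> nat \<Rightarrow> (nat \<times> nat \<times> nat) set set" where
  "link_vertices t gl v = (\<lambda>x. Collect (edge_eq t gl x)) `
      {(j, b, w). (j, b) \<in> link_triangles t gl v \<and> w < 4 \<and> w \<noteq> b}"

definition link_edges :: "nat \<Rightarrow> gluing \<Rightarrow> nat \<times> nat \<Rightarrow> (nat \<times> nat \<times> nat) set set" where
  "link_edges t gl v = (\<lambda>x. Collect (ledge_eq t gl x)) `
      {(j, b, f). (j, b) \<in> link_triangles t gl v \<and> f < 4 \<and> f \<noteq> b}"

definition link_euler :: "nat \<Rightarrow> gluing \<Rightarrow> nat \<times> nat \<Rightarrow> int" where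
  "link_euler t gl v = int (card (link_vertices t gl v)) - int (card (link_edges t gl v))
                       + int (card (link_triangles t gl v))"

definition link_has_boundary :: "nat \<Rightarrow> gluing \<Rightarrow> nat \<times> nat \<Rightarrow> bool" where
  "link_has_boundary t gl v \<longleftrightarrow>
     (\<exists>j b f. (j, b) \<in> link_triangles t gl v \<and> f < 4 \<and> f \<noteq> b \<and> gl j f = None)"

(* A gluing of t tetrahedra is a triangulation of a compact 3-manifold
   (possibly with boundary) iff no edge is identified with itself in reverse
   and every vertex link (a connected surface) is a 2-sphere (closed, chi = 2)
   or a disc (with boundary, chi = 1). *)
definition is_3manifold_triangulation :: "nat \<Rightarrow> gluing \<Rightarrow> bool" where
  "is_3manifold_triangulation t gl \<longleftrightarrow> valid_gluing t gl \<and>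
     (\<forall>i<t. \<forall>a<4. \<forall>b<4. a \<noteq> b \<longrightarrow> \<not> edge_eq t gl (i, a, b) (i, b, a)) \<and>
     (\<forall>i<t. \<forall>a<4.
        (link_has_boundary t gl (i, a) \<longrightarrow> link_euler t gl (i, a) = 1) \<and>
        (\<not> link_has_boundary t gl (i, a) \<longrightarrow> link_euler t gl (i, a) = 2))"

(* A vector of R^(7t) is a function nat \<times> nat \<Rightarrow> real
   supported on {..<t} \<times> {..<7}.  Coordinate (i, k): k < 4 is the triangle
   type of tetrahedron i cutting off vertex k; k = 4,5,6 are the quad types
   separating {0,1}|{2,3}, {0,2}|{1,3}, {0,3}|{1,2}.
   --------------------------------------------------------------------- *)

(* index of the quad type separating {a,b} from the other two vertices *)
definition quad_type :: "nat \<Rightarrow> nat \<Rightarrow> nat" where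
  "quad_type a b = (if a = 0 then b + 3 else if b = 0 then a + 3 else 9 - a - b)"

definition coord_index :: "nat \<Rightarrow> (nat \<times> nat) set" where
  "coord_index t = {..<t} \<times> {..<7}"

(* The normal arc in face f (of tetrahedron i) around the corner c
   (joining the two sides of the face meeting at c) is met by the triangle
   type c and the quad type separating {c, f} from the rest. *)
definition matching :: "nat \<Rightarrow> gluing \<Rightarrow> (nat \<times> nat \<Rightarrow> real) \<Rightarrow> bool" where
  "matching t gl v \<longleftrightarrow>
     (\<forall>i<t. \<forall>f<4. \<forall>j s. gl i f = Some (j, s) \<longrightarrow>
        (\<forall>c<4. c \<noteq> f \<longrightarrow>
           v (i, c) + v (i, quad_type c f) = v (j, s c) + v (j, quad_type (s c) (s f))))"

definition haken_cone :: "nat \<Rightarrow> gluing \<Rightarrow> (nat \<times> nat \<Rightarrow> real) set" where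
  "haken_cone t gl = {v. (\<forall>x. x \<notin> coord_index t \<longrightarrow> v x = 0) \<and>
                          (\<forall>x\<in>coord_index t. 0 \<le> v x) \<and> matching t gl v}"

definition integral_vec :: "('a \<Rightarrow> real) \<Rightarrow> bool" where
  "integral_vec v \<longleftrightarrow> (\<forall>x. v x \<in> \<int>)"

definition extreme_ray_vec :: "('a \<Rightarrow> real) set \<Rightarrow> ('a \<Rightarrow> real) \<Rightarrow> bool" where
  "extreme_ray_vec C u \<longleftrightarrow> u \<in> C \<and> u \<noteq> (\<lambda>x. 0) \<and>
     (\<forall>a\<in>C. \<forall>b\<in>C. (\<lambda>x. a x + b x) = u \<longrightarrow> (\<exists>c\<ge>0. a = (\<lambda>x. c * u x)) \<and> (\<exists>c\<ge>0. b = (\<lambda>x. c * u x)))"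

definition min_vertex_solution :: "('a \<Rightarrow> real) set \<Rightarrow> ('a \<Rightarrow> real) \<Rightarrow> bool" where
  "min_vertex_solution C v \<longleftrightarrow> extreme_ray_vec C v \<and> integral_vec v \<and>
     (\<forall>c. 0 < c \<and> c < 1 \<longrightarrow> \<not> integral_vec (\<lambda>x. c * v x))"

definition min_hilbert_basis :: "('a \<Rightarrow> real) set \<Rightarrow> ('a \<Rightarrow> real) set" where
  "min_hilbert_basis C = {v. v \<in> C \<and> integral_vec v \<and> v \<noteq> (\<lambda>x. 0) \<and>
     \<not> (\<exists>a b. a \<in> C \<and> b \<in> C \<and> integral_vec a \<and> integral_vec b \<and>
               a \<noteq> (\<lambda>x. 0) \<and> b \<noteq> (\<lambda>x. 0) \<and> v = (\<lambda>x. a x + b x))}"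

end

theory Submission
  imports Defs "Jordan_Normal_Form.Determinant"
begin

definition ipr :: "nat \<Rightarrow> (nat \<Rightarrow> real) \<Rightarrow> (nat \<Rightarrow> real) \<Rightarrow> real" where
  "ipr N u v = (\<Sum>j<N. u j * v j)"

definition cfr :: "nat \<Rightarrow> (nat \<Rightarrow> real) \<Rightarrow> (nat \<Rightarrow> real) \<Rightarrow> real" where
  "cfr N v w = (if ipr N w w = 0 then 0 else ipr N v w / ipr N w w)"

primrec gsf :: "(nat \<Rightarrow> nat \<Rightarrow> real) \<Rightarrow> nat \<Rightarrow> nat \<Rightarrow> nat \<Rightarrow> nat \<Rightarrow> real" where
  "gsf r N 0 = r"
| "gsf r N (Suc k) = (gsf r N k)(k := (\<lambda>j. r k j - (\<Sum>l<k. cfr N (r k) (gsf r N k l) * gsf r N k l j)))"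

definition gsw :: "(nat \<Rightarrow> nat \<Rightarrow> real) \<Rightarrow> nat \<Rightarrow> nat \<Rightarrow> nat \<Rightarrow> real" where
  "gsw r N i = gsf r N (Suc i) i"

lemma gsf_stab: "i < k \<Longrightarrow> gsf r N k i = gsw r N i"
proof (induction k)
  case 0 then show ?case by simp
next
  case (Suc k)
  show ?case
  proof (cases "i = k")
    case True then show ?thesis by (simp add: gsw_def)
  next
    case False then have "i < k" using Suc.prems by simp
    then show ?thesis using Suc.IH False by simp
  qed
qed

lemma gsw_eq: "gsw r N k = (\<lambda>j. r k j - (\<Sum>l<k. cfr N (r k) (gsw r N l) * gsw r N l j))"
proof -
  have "gsw r N k = (\<lambda>j. r k j - (\<Sum>l<k. cfr N (r k) (gsf r N k l) * gsf r N k l j))"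
    by (simp add: gsw_def)
  also have "\<dots> = (\<lambda>j. r k j - (\<Sum>l<k. cfr N (r k) (gsw r N l) * gsw r N l j))"
    by (intro ext arg_cong2[where f=minus] refl sum.cong) (auto simp: gsf_stab)
  finally show ?thesis .
qed

lemma ipr_self_nonneg: "0 \<le> ipr N u u"
  unfolding ipr_def by (auto intro: sum_nonneg)

lemma ipr_self_zero: "ipr N u u = 0 \<Longrightarrow> j < N \<Longrightarrow> u j = 0"
  unfolding ipr_def
  by (metis (no_types, lifting) finite_lessThan lessThan_iff mult_eq_0_iff sum_nonneg_eq_0_iff zero_le_square)

lemma ipr_zero_left: "ipr N u u = 0 \<Longrightarrow> ipr N v u = 0"
  unfolding ipr_def using ipr_self_zero[unfolded ipr_def] by (intro sum.neutral) auto

lemma ipr_comm: "ipr N u v = ipr N v u"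
  unfolding ipr_def by (simp add: mult.commute)

lemma ipr_diff_sum_left: "ipr N (\<lambda>j. a j - (\<Sum>l\<in>L. c l * b l j)) v = ipr N a v - (\<Sum>l\<in>L. c l * ipr N (b l) v)"
  unfolding ipr_def by (simp add: algebra_simps sum_subtractf sum_distrib_left sum_distrib_right sum.swap[of _ L])

lemma gsw_orth: "m < k \<Longrightarrow> ipr N (gsw r N k) (gsw r N m) = 0"
proof (induction k arbitrary: m rule: less_induct)
  case (less k)
  let ?W = "gsw r N"
  have orth: "ipr N (?W l) (?W m) = 0" if "l < k" "l \<noteq> m" for l
  proof (cases "l < m")
    case True
    then have "ipr N (?W m) (?W l) = 0" using less.IH less.prems by auto
    then show ?thesis by (simp add: ipr_comm)
  next
    case False then have "m < l" using that by simp
    then show ?thesis using less.IH that by auto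
  qed
  have "ipr N (?W k) (?W m) = ipr N (r k) (?W m) - (\<Sum>l<k. cfr N (r k) (?W l) * ipr N (?W l) (?W m))"
    by (subst gsw_eq) (rule ipr_diff_sum_left)
  also have "(\<Sum>l<k. cfr N (r k) (?W l) * ipr N (?W l) (?W m)) = cfr N (r k) (?W m) * ipr N (?W m) (?W m)"
  proof -
    have "(\<Sum>l<k. cfr N (r k) (?W l) * ipr N (?W l) (?W m)) = cfr N (r k) (?W m) * ipr N (?W m) (?W m) + (\<Sum>l\<in>{..<k}-{m}. cfr N (r k) (?W l) * ipr N (?W l) (?W m))"
      by (rule sum.remove) (use less.prems in auto)
    also have "(\<Sum>l\<in>{..<k}-{m}. cfr N (r k) (?W l) * ipr N (?W l) (?W m)) = 0"
      by (rule sum.neutral) (use orth in auto)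
    finally show ?thesis by simp
  qed
  finally show ?case
    using ipr_zero_left[of N "?W m" "r k"] by (auto simp: cfr_def)
qed

lemma gsw_norm: "ipr N (gsw r N k) (gsw r N k) \<le> ipr N (r k) (r k)"
proof -
  let ?W = "gsw r N"
  define P where "P = (\<lambda>j. \<Sum>l<k. cfr N (r k) (?W l) * ?W l j)"
  have rk: "r k = (\<lambda>j. ?W k j + P j)"
    by (subst gsw_eq) (simp add: P_def)
  have "ipr N (?W k) P = (\<Sum>l<k. cfr N (r k) (?W l) * ipr N (?W k) (?W l))"
    unfolding ipr_def P_def by (simp add: sum_distrib_left sum.swap[of _ "{..<k}"] algebra_simps)
  also have "\<dots> = 0" by (rule sum.neutral) (auto simp: gsw_orth)
  finally have o: "ipr N (?W k) P = 0" .
  have "ipr N (r k) (r k) = ipr N (?W k) (?W k) + 2 * ipr N (?W k) P + ipr N P P"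
    by (subst rk)+ (simp add: ipr_def algebra_simps sum.distrib sum_distrib_left)
  then show ?thesis using o ipr_self_nonneg[of N P] by simp
qed

lemma sum_lower_split: "i < (n::nat) \<Longrightarrow> (\<Sum>l<n. (if l < i then f l else if l = i then g else (0::real))) = (\<Sum>l<i. f l) + g"
proof (induction n)
  case 0 then show ?case by simp
next
  case (Suc n)
  show ?case
  proof (cases "i < n")
    case True then show ?thesis using Suc by simp
  next
    case False then have "i = n" using Suc.prems by simp
    then show ?thesis by (simp add: atLeast0LessThan[symmetric])
  qed
qed

lemma prod_list_map_upt_prod: "prod_list (map f [0..<n]) = (\<Prod>i<n. f i)"
  by (induction n) auto

lemma hadamard:
  fixes A :: "real mat"
  assumes A: "A \<in> carrier_mat n n"
  shows "(det A)^2 \<le> (\<Prod>i<n. \<Sum>j<n. (A $$ (i,j))^2)"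
proof -
  define r where "r = (\<lambda>i j. A $$ (i,j))"
  define W where "W = gsw r n"
  define Wm where "Wm = mat n n (\<lambda>(i,j). W i j)"
  define L where "L = mat n n (\<lambda>(i,l). if l < i then cfr n (r i) (W l) else if l = i then 1 else (0::real))"
  have Wm: "Wm \<in> carrier_mat n n" and L: "L \<in> carrier_mat n n" by (auto simp: Wm_def L_def)
  have AL: "A = L * Wm"
  proof (rule eq_matI)
    fix i j assume ij: "i < dim_row (L * Wm)" "j < dim_col (L * Wm)"
    then have i: "i < n" and j: "j < n" using L Wm by auto
    have "(L * Wm) $$ (i,j) = (\<Sum>l<n. L $$ (i,l) * Wm $$ (l,j))"
      using i j L Wm by (simp add: scalar_prod_def lessThan_atLeast0)
    also have "\<dots> = (\<Sum>l<n. (if l < i then cfr n (r i) (W l) * W l j else if l = i then W i j else 0))"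
      using i j by (intro sum.cong refl) (auto simp: L_def Wm_def)
    also have "\<dots> = (\<Sum>l<i. cfr n (r i) (W l) * W l j) + W i j"
      by (rule sum_lower_split[OF i])
    also have "\<dots> = r i j"
      unfolding W_def by (subst (2) gsw_eq) simp
    finally show "A $$ (i,j) = (L * Wm) $$ (i,j)" by (simp add: r_def)
  qed (use A L Wm in auto)
  have "det L = prod_list (diag_mat L)"
    by (rule det_lower_triangular[OF _ L]) (auto simp: L_def)
  also have "\<dots> = 1"
    unfolding diag_mat_def using L by (simp add: prod_list_map_upt_prod L_def)
  finally have dL: "det L = 1" .
  have dA: "det A = det Wm" using AL det_mult[OF L Wm] dL by simp
  define G where "G = Wm * transpose_mat Wm"
  have G: "G \<in> carrier_mat n n" using Wm by (simp add: G_def)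
  have Gij: "G $$ (i,k) = ipr n (W i) (W k)" if "i < n" "k < n" for i k
    using that Wm by (simp add: G_def scalar_prod_def ipr_def Wm_def lessThan_atLeast0)
  have "det G = det Wm * det Wm"
    unfolding G_def using det_mult[OF Wm transpose_carrier_mat[THEN iffD2, OF Wm]] det_transpose[OF Wm] by simp
  also have "det G = prod_list (diag_mat G)"
  proof (rule det_upper_triangular[OF _ G])
    show "upper_triangular G"
      using G by (intro upper_triangularI) (auto simp: Gij W_def gsw_orth)
  qed
  also have "\<dots> = (\<Prod>i<n. ipr n (W i) (W i))"
    unfolding diag_mat_def using G by (simp add: prod_list_map_upt_prod Gij)
  finally have "(det A)^2 = (\<Prod>i<n. ipr n (W i) (W i))" using dA by (simp add: power2_eq_square)
  also have "\<dots> \<le> (\<Prod>i<n. ipr n (r i) (r i))"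
    by (intro prod_mono conjI ipr_self_nonneg) (simp add: W_def gsw_norm)
  also have "\<dots> = (\<Prod>i<n. \<Sum>j<n. (A $$ (i,j))^2)"
    by (simp add: ipr_def r_def power2_eq_square)
  finally show ?thesis .
qed

definition mk :: "('a \<Rightarrow> real) list \<Rightarrow> 'a list \<Rightarrow> real mat" where
  "mk R cs = mat (length R) (length cs) (\<lambda>(i,l). (R!i) (cs!l))"

definition minr :: "('a \<Rightarrow> real) list \<Rightarrow> 'a list \<Rightarrow> nat \<Rightarrow> real mat" where
  "minr R cs l = mat (length R) (length R) (\<lambda>(i,j). (R!i) (cs ! (if j < l then j else Suc j)))"

definition cofv :: "('a \<Rightarrow> real) list \<Rightarrow> 'a list \<Rightarrow> nat \<Rightarrow> real" where
  "cofv R cs l = (-1)^(length R + l) * det (minr R cs l)"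

lemma mk_carrier: "mk R cs \<in> carrier_mat (length R) (length cs)"
  by (simp add: mk_def)

lemma mat_delete_mk:
  assumes "length cs = Suc (length R)"
  shows "mat_delete (mk (R @ [a]) cs) (length R) l = minr R cs l"
  by (rule eq_matI) (use assms in \<open>auto simp: mat_delete_def mk_def minr_def nth_append\<close>)

lemma cof_expand:
  assumes "length cs = Suc (length R)"
  shows "det (mk (R @ [a]) cs) = (\<Sum>l<length cs. a (cs!l) * cofv R cs l)"
proof -
  have M: "mk (R @ [a]) cs \<in> carrier_mat (length cs) (length cs)"
    using mk_carrier[of "R @ [a]" cs] assms by simp
  have "det (mk (R @ [a]) cs) = (\<Sum>l<length cs. mk (R @ [a]) cs $$ (length R, l) * cofactor (mk (R @ [a]) cs) (length R) l)"
    by (rule laplace_expansion_row[OF M]) (use assms in simp)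
  also have "\<dots> = (\<Sum>l<length cs. a (cs!l) * cofv R cs l)"
  proof (intro sum.cong refl)
    fix l assume l: "l \<in> {..<length cs}"
    have "mk (R @ [a]) cs $$ (length R, l) = a (cs!l)" using l assms by (simp add: mk_def)
    moreover have "cofactor (mk (R @ [a]) cs) (length R) l = cofv R cs l"
      by (simp add: cofactor_def cofv_def mat_delete_mk[OF assms])
    ultimately show "mk (R @ [a]) cs $$ (length R, l) * cofactor (mk (R @ [a]) cs) (length R) l = a (cs!l) * cofv R cs l"
      by simp
  qed
  finally show ?thesis .
qed

definition yv :: "('a \<Rightarrow> real) list \<Rightarrow> 'a list \<Rightarrow> 'a \<Rightarrow> real" where
  "yv R cs x = (\<Sum>l<length cs. if cs!l = x then cofv R cs l else 0)"

lemma yv_nth: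
  assumes "distinct cs" "l < length cs"
  shows "yv R cs (cs!l) = cofv R cs l"
proof -
  have "yv R cs (cs!l) = (\<Sum>l'<length cs. if l' = l then cofv R cs l' else 0)"
    unfolding yv_def by (intro sum.cong refl) (use assms in \<open>auto simp: nth_eq_iff_index_eq\<close>)
  also have "\<dots> = cofv R cs l" using assms by simp
  finally show ?thesis .
qed

lemma yv_out: "x \<notin> set cs \<Longrightarrow> yv R cs x = 0"
  unfolding yv_def by (intro sum.neutral) auto

lemma sum_set_nth: "distinct cs \<Longrightarrow> (\<Sum>x\<in>set cs. f x) = (\<Sum>l<length cs. f (cs!l))"
  by (simp add: sum.distinct_set_conv_list sum_list_sum_nth atLeast0LessThan)

lemma yv_kernel:
  assumes "distinct cs" "length cs = Suc (length R)"
  shows "(\<Sum>x\<in>set cs. a x * yv R cs x) = det (mk (R @ [a]) cs)"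
  using assms by (simp add: sum_set_nth yv_nth cof_expand)

lemma minr0: "length R = length cs \<Longrightarrow> minr R (p # cs) 0 = mk R cs"
  by (rule eq_matI) (auto simp: minr_def mk_def)

lemma minors_zero_kernel:
  assumes "distinct cs"
    and "\<forall>R. set R \<subseteq> Rows \<longrightarrow> length R = length cs \<longrightarrow> det (mk R cs) = 0"
  shows "\<exists>y. (\<forall>x. x \<notin> set cs \<longrightarrow> y x = 0) \<and> (\<exists>x. y x \<noteq> 0) \<and>
             (\<forall>\<rho>\<in>Rows. (\<Sum>x\<in>set cs. \<rho> x * y x) = 0)"
  using assms
proof (induction cs)
  case Nil
  have "det (mk [] ([]::'a list)) = 1" by (simp add: mk_def)
  with Nil.prems show ?case by (metis empty_subsetI list.set(1) list.size(3) one_neq_zero)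
next
  case (Cons p cs)
  show ?case
  proof (cases "\<forall>R. set R \<subseteq> Rows \<longrightarrow> length R = length cs \<longrightarrow> det (mk R cs) = 0")
    case True
    then obtain y where y: "\<forall>x. x \<notin> set cs \<longrightarrow> y x = 0" "\<exists>x. y x \<noteq> 0"
      "\<forall>\<rho>\<in>Rows. (\<Sum>x\<in>set cs. \<rho> x * y x) = 0"
      using Cons by auto
    have yp: "y p = 0" using y(1) Cons.prems(1) by simp
    show ?thesis
    proof (rule exI[of _ y], intro conjI ballI)
      fix \<rho> assume "\<rho> \<in> Rows"
      then show "(\<Sum>x\<in>set (p # cs). \<rho> x * y x) = 0"
        using y(3) yp Cons.prems(1) by simp
    next
      show "\<exists>x. y x \<noteq> 0" using y(2) .
    qed (use y(1) in auto)
  next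
    case False
    then obtain R where R: "set R \<subseteq> Rows" "length R = length cs" "det (mk R cs) \<noteq> 0" by auto
    let ?y = "yv R (p # cs)"
    have "?y p = cofv R (p # cs) 0" using yv_nth[OF Cons.prems(1), of 0] by simp
    also have "\<dots> \<noteq> 0" using R(2,3) by (simp add: cofv_def minr0)
    finally have yp: "?y p \<noteq> 0" .
    show ?thesis
    proof (rule exI[of _ ?y], intro conjI ballI)
      fix \<rho> assume r: "\<rho> \<in> Rows"
      have "(\<Sum>x\<in>set (p # cs). \<rho> x * ?y x) = det (mk (R @ [\<rho>]) (p # cs))"
        by (rule yv_kernel) (use Cons.prems(1) R in auto)
      also have "\<dots> = 0" using Cons.prems(2) R r by auto
      finally show "(\<Sum>x\<in>set (p # cs). \<rho> x * ?y x) = 0" .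
    next
      show "\<exists>x. ?y x \<noteq> 0" using yp by blast
    next
      show "\<forall>x. x \<notin> set (p # cs) \<longrightarrow> ?y x = 0" using yv_out[of _ "p # cs" R] by blast
    qed
  qed
qed

lemma det_Ints: "(\<forall>i<dim_row A. \<forall>j<dim_col A. A $$ (i,j) \<in> \<int>) \<Longrightarrow> det (A::real mat) \<in> \<int>"
  unfolding det_def
  by (auto intro!: Ints_sum Ints_mult Ints_prod simp: sign_def)

lemma cofv_Ints:
  assumes "\<forall>\<rho>\<in>set R. \<forall>x. \<rho> x \<in> \<int>"
  shows "cofv R cs l \<in> \<int>"
  unfolding cofv_def using assms
  by (intro Ints_mult det_Ints) (auto simp: minr_def)

lemma cofv_bound:
  assumes "distinct cs" "length cs = Suc (length R)" "l < length cs"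
    and "\<forall>\<rho>\<in>set R. \<forall>X. finite X \<longrightarrow> (\<Sum>x\<in>X. (\<rho> x)^2) \<le> 4"
  shows "\<bar>cofv R cs l\<bar> \<le> 2 ^ length R"
proof -
  let ?k = "length R"
  let ?g = "\<lambda>j. cs ! (if j < l then j else Suc j)"
  have inj: "inj_on ?g {..<?k}"
    using assms(1,2) by (auto simp: inj_on_def nth_eq_iff_index_eq split: if_splits)
  have rowb: "(\<Sum>j<?k. (minr R cs l $$ (i,j))^2) \<le> 4" if i: "i < ?k" for i
  proof -
    have "(\<Sum>j<?k. (minr R cs l $$ (i,j))^2) = (\<Sum>j<?k. ((R!i) (?g j))^2)"
      using i by (intro sum.cong refl) (simp add: minr_def)
    also have "\<dots> = (\<Sum>x\<in>?g ` {..<?k}. ((R!i) x)^2)"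
      by (rule sum.reindex[OF inj, symmetric, unfolded comp_def])
    also have "\<dots> \<le> 4" using assms(4) i by auto
    finally show ?thesis .
  qed
  have "(det (minr R cs l))^2 \<le> (\<Prod>i<?k. \<Sum>j<?k. (minr R cs l $$ (i,j))^2)"
    by (rule hadamard) (simp add: minr_def)
  also have "\<dots> \<le> (\<Prod>i<?k. 4)"
    by (intro prod_mono conjI sum_nonneg) (auto simp: rowb)
  also have "\<dots> = (2 ^ ?k)^2" by (simp add: power2_eq_square power_mult_distrib[symmetric])
  finally have "(det (minr R cs l))^2 \<le> (2 ^ ?k)^2" .
  then have "\<bar>det (minr R cs l)\<bar> \<le> 2 ^ ?k"
    using abs_le_square_iff[of "det (minr R cs l)" "2 ^ ?k"] by simp
  then show ?thesis by (simp add: cofv_def abs_mult)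
qed

lemma circuit_int_vec:
  fixes Rows :: "('a \<Rightarrow> real) set" and w :: "'a \<Rightarrow> real"
  assumes S: "finite S" "card S = Suc k"
    and wS: "\<forall>x\<in>S. w x \<noteq> 0"
    and wker: "\<forall>\<rho>\<in>Rows. (\<Sum>x\<in>S. \<rho> x * w x) = 0"
    and one: "\<forall>y. (\<forall>x. x \<notin> S \<longrightarrow> y x = 0) \<longrightarrow> (\<forall>\<rho>\<in>Rows. (\<Sum>x\<in>S. \<rho> x * y x) = 0) \<longrightarrow> (\<exists>c. \<forall>x. y x = c * w x)"
    and rint: "\<forall>\<rho>\<in>Rows. \<forall>x. \<rho> x \<in> \<int>"
    and rnorm: "\<forall>\<rho>\<in>Rows. \<forall>X. finite X \<longrightarrow> (\<Sum>x\<in>X. (\<rho> x)^2) \<le> 4"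
  shows "\<exists>y. (\<forall>x. x \<notin> S \<longrightarrow> y x = 0) \<and> (\<forall>\<rho>\<in>Rows. (\<Sum>x\<in>S. \<rho> x * y x) = 0) \<and>
             (\<exists>x. y x \<noteq> 0) \<and> (\<forall>x. y x \<in> \<int>) \<and> (\<forall>x. \<bar>y x\<bar> \<le> 2 ^ k)"
proof -
  obtain cs0 where cs0: "set cs0 = S" "distinct cs0" using finite_distinct_list[OF S(1)] by blast
  then have "length cs0 = Suc k" using S(2) distinct_card by fastforce
  then obtain p cs where cs: "cs0 = p # cs" by (cases cs0) auto
  have lcs: "length cs = k" using \<open>length cs0 = Suc k\<close> cs by simp
  have dcs: "distinct (p # cs)" and Scs: "S = insert p (set cs)" and pcs: "p \<notin> set cs"
    using cs0 cs by auto
  have wp: "w p \<noteq> 0" using wS Scs by auto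
  have "\<not> (\<forall>R. set R \<subseteq> Rows \<longrightarrow> length R = length cs \<longrightarrow> det (mk R cs) = 0)"
  proof
    assume H: "\<forall>R. set R \<subseteq> Rows \<longrightarrow> length R = length cs \<longrightarrow> det (mk R cs) = 0"
    obtain y where y: "\<forall>x. x \<notin> set cs \<longrightarrow> y x = 0" "\<exists>x. y x \<noteq> 0"
      "\<forall>\<rho>\<in>Rows. (\<Sum>x\<in>set cs. \<rho> x * y x) = 0"
      using minors_zero_kernel[OF _ H] dcs by auto
    have yp: "y p = 0" using y(1) pcs by simp
    have "\<forall>x. x \<notin> S \<longrightarrow> y x = 0" using y(1) Scs by auto
    moreover have "\<forall>\<rho>\<in>Rows. (\<Sum>x\<in>S. \<rho> x * y x) = 0"
      using y(3) yp pcs Scs by simp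
    ultimately obtain c where c: "\<forall>x. y x = c * w x" using one by blast
    then have "c = 0" using yp wp by simp
    then show False using c y(2) by simp
  qed
  then obtain R where R: "set R \<subseteq> Rows" "length R = length cs" "det (mk R cs) \<noteq> 0" by auto
  let ?y = "yv R (p # cs)"
  have "?y p = cofv R (p # cs) 0" using yv_nth[OF dcs, of 0] by simp
  also have "\<dots> \<noteq> 0" using R(2,3) by (simp add: cofv_def minr0)
  finally have yp: "?y p \<noteq> 0" .
  show ?thesis
  proof (rule exI[of _ ?y], intro conjI allI ballI impI)
    fix x assume "x \<notin> S" then show "?y x = 0" using yv_out[of x "p # cs" R] Scs by simp
  next
    show "\<exists>x. ?y x \<noteq> 0" using yp by blast
  next
    fix \<rho> assume r: "\<rho> \<in> Rows"
    have "(\<Sum>x\<in>S. \<rho> x * ?y x) = det (mk (R @ [\<rho>]) (p # cs))"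
      using yv_kernel[OF dcs, of R \<rho>] R(2) Scs by simp
    also have "\<dots> = 0"
    proof -
      let ?M = "mk (R @ [\<rho>]) (p # cs)"
      have M: "?M \<in> carrier_mat (Suc k) (Suc k)" using mk_carrier[of "R @ [\<rho>]" "p # cs"] R(2) lcs by simp
      define v where "v = vec (Suc k) (\<lambda>l. w ((p # cs) ! l))"
      have v: "v \<in> carrier_vec (Suc k)" by (simp add: v_def)
      have "v $ 0 \<noteq> 0" using wp by (simp add: v_def)
      then have vnz: "v \<noteq> 0\<^sub>v (Suc k)" by auto
      have "?M *\<^sub>v v = 0\<^sub>v (Suc k)"
      proof (rule eq_vecI)
        fix i assume i: "i < dim_vec (0\<^sub>v (Suc k) :: real vec)"
        then have i': "i < length (R @ [\<rho>])" using R(2) lcs by simp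
        have "(R @ [\<rho>]) ! i \<in> set (R @ [\<rho>])" by (rule nth_mem[OF i'])
        moreover have "set (R @ [\<rho>]) \<subseteq> Rows" using R(1) r by auto
        ultimately have ri: "(R @ [\<rho>]) ! i \<in> Rows" by blast
        have "(?M *\<^sub>v v) $ i = (\<Sum>l<Suc k. ((R @ [\<rho>]) ! i) ((p # cs) ! l) * w ((p # cs) ! l))"
          using i' M lcs R(2) by (simp add: mk_def v_def scalar_prod_def lessThan_atLeast0)
        also have "\<dots> = (\<Sum>x\<in>S. ((R @ [\<rho>]) ! i) x * w x)"
          using sum_set_nth[OF dcs, of "\<lambda>x. ((R @ [\<rho>]) ! i) x * w x"] Scs lcs by simp
        also have "\<dots> = 0" using wker ri by blast
        finally show "(?M *\<^sub>v v) $ i = 0\<^sub>v (Suc k) $ i" using i by simp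
      qed (use M in simp)
      then show ?thesis using det_0_iff_vec_prod_zero[OF M] v vnz by blast
    qed
    finally show "(\<Sum>x\<in>S. \<rho> x * ?y x) = 0" .
  next
    fix x
    show "?y x \<in> \<int>"
    proof (cases "x \<in> set (p # cs)")
      case True
      then obtain l where l: "l < length (p # cs)" "x = (p # cs) ! l" by (metis in_set_conv_nth)
      then show ?thesis using yv_nth[OF dcs l(1), of R] cofv_Ints[of R] rint R(1) by auto
    qed (simp add: yv_out)
  next
    fix x
    show "\<bar>?y x\<bar> \<le> 2 ^ k"
    proof (cases "x \<in> set (p # cs)")
      case True
      then obtain l where l: "l < length (p # cs)" "x = (p # cs) ! l" by (metis in_set_conv_nth)
      then show ?thesis using yv_nth[OF dcs l(1), of R] cofv_bound[OF dcs _ l(1), of R] rnorm R lcs by auto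
    qed (simp add: yv_out)
  qed
qed

definition supp :: "('a \<Rightarrow> real) \<Rightarrow> 'a set" where
  "supp v = {x. v x \<noteq> 0}"

definition rowv :: "'a \<Rightarrow> 'a \<Rightarrow> 'a \<Rightarrow> 'a \<Rightarrow> 'a \<Rightarrow> real" where
  "rowv a b c d = (\<lambda>x. (if x = a then 1 else 0) + (if x = b then 1 else 0) - (if x = c then 1 else 0) - (if x = d then 1 else 0))"

definition Rows :: "nat \<Rightarrow> gluing \<Rightarrow> (nat \<times> nat \<Rightarrow> real) set" where
  "Rows t gl = {rowv (i,c) (i, quad_type c f) (j, s c) (j, quad_type (s c) (s f)) | i f j s c.
      i < t \<and> f < 4 \<and> gl i f = Some (j, s) \<and> c < 4 \<and> c \<noteq> f}"

lemma sum_delta_out: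
  assumes "finite X" "\<forall>x. x \<notin> X \<longrightarrow> v x = 0"
  shows "(\<Sum>x\<in>X. (if x = a then 1 else 0) * v x) = (v a :: real)"
proof -
  have "(\<Sum>x\<in>X. (if x = a then 1 else 0) * v x) = (\<Sum>x\<in>X. if x = a then v a else 0)"
    by (intro sum.cong) auto
  also have "\<dots> = (if a \<in> X then v a else 0)" using assms(1) by (simp add: sum.delta')
  also have "\<dots> = v a" using assms(2) by auto
  finally show ?thesis .
qed

lemma sum_rowv:
  assumes "finite X" "\<forall>x. x \<notin> X \<longrightarrow> v x = 0"
  shows "(\<Sum>x\<in>X. rowv a b c d x * v x) = v a + v b - v c - v d"
proof -
  have "(\<Sum>x\<in>X. rowv a b c d x * v x) = (\<Sum>x\<in>X. (if x = a then 1 else 0) * v x) + (\<Sum>x\<in>X. (if x = b then 1 else 0) * v x)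
      - (\<Sum>x\<in>X. (if x = c then 1 else 0) * v x) - (\<Sum>x\<in>X. (if x = d then 1 else 0) * v x)"
    unfolding rowv_def by (simp add: algebra_simps sum.distrib sum_subtractf)
  then show ?thesis using sum_delta_out[OF assms] by simp
qed

lemma matching_rows:
  assumes "finite X" "\<forall>x. x \<notin> X \<longrightarrow> v x = 0"
  shows "matching t gl v \<longleftrightarrow> (\<forall>\<rho>\<in>Rows t gl. (\<Sum>x\<in>X. \<rho> x * v x) = 0)"
proof
  assume m: "matching t gl v"
  show "\<forall>\<rho>\<in>Rows t gl. (\<Sum>x\<in>X. \<rho> x * v x) = 0"
  proof
    fix \<rho> assume "\<rho> \<in> Rows t gl"
    then obtain i f j s c where d: "\<rho> = rowv (i,c) (i, quad_type c f) (j, s c) (j, quad_type (s c) (s f))"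
      "i < t" "f < 4" "gl i f = Some (j, s)" "c < 4" "c \<noteq> f"
      unfolding Rows_def by blast
    have "v (i,c) + v (i, quad_type c f) = v (j, s c) + v (j, quad_type (s c) (s f))"
      using m d unfolding matching_def by blast
    then show "(\<Sum>x\<in>X. \<rho> x * v x) = 0" unfolding d(1) sum_rowv[OF assms] by simp
  qed
next
  assume r: "\<forall>\<rho>\<in>Rows t gl. (\<Sum>x\<in>X. \<rho> x * v x) = 0"
  show "matching t gl v"
    unfolding matching_def
  proof (intro allI impI)
    fix i f j s c assume h: "i < t" "f < 4" "gl i f = Some (j, s)" "c < 4" "c \<noteq> f"
    then have "rowv (i,c) (i, quad_type c f) (j, s c) (j, quad_type (s c) (s f)) \<in> Rows t gl"
      unfolding Rows_def by blast
    then have "(\<Sum>x\<in>X. rowv (i,c) (i, quad_type c f) (j, s c) (j, quad_type (s c) (s f)) x * v x) = 0"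
      using r by blast
    then show "v (i,c) + v (i, quad_type c f) = v (j, s c) + v (j, quad_type (s c) (s f))"
      unfolding sum_rowv[OF assms] by simp
  qed
qed

lemma quad_ge: "a < 4 \<Longrightarrow> b < 4 \<Longrightarrow> a \<noteq> b \<Longrightarrow> 4 \<le> quad_type a b"
  unfolding quad_type_def by auto

lemma rowv_int: "rowv a b c d x \<in> \<int>"
  unfolding rowv_def by auto

lemma rowv_norm:
  assumes "a \<noteq> b" "c \<noteq> d" "finite X"
  shows "(\<Sum>x\<in>X. (rowv a b c d x)^2) \<le> 4"
proof -
  let ?P = "\<lambda>x. (if x = a then 1 else 0) + (if x = b then (1::real) else 0)"
  let ?Q = "\<lambda>x. (if x = c then 1 else 0) + (if x = d then (1::real) else 0)"
  have pw: "(rowv a b c d x)^2 \<le> ?P x + ?Q x" for x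
    using assms(1,2) unfolding rowv_def by (auto simp: power2_eq_square)
  have "(\<Sum>x\<in>X. (rowv a b c d x)^2) \<le> (\<Sum>x\<in>X. ?P x + ?Q x)"
    by (rule sum_mono) (rule pw)
  also have "\<dots> = (if a \<in> X then 1 else 0) + (if b \<in> X then 1 else 0) + (if c \<in> X then 1 else 0) + (if d \<in> X then 1 else 0)"
    using assms(3) by (simp add: sum.distrib sum.delta')
  also have "\<dots> \<le> 4" by auto
  finally show ?thesis .
qed

lemma Rows_int: "\<forall>\<rho>\<in>Rows t gl. \<forall>x. \<rho> x \<in> \<int>"
proof (intro ballI allI)
  fix \<rho> x assume "\<rho> \<in> Rows t gl"
  then obtain a b c d where "\<rho> = rowv a b c d" unfolding Rows_def by blast
  then show "\<rho> x \<in> \<int>" by (simp add: rowv_int)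
qed

lemma Rows_norm:
  assumes "valid_gluing t gl"
  shows "\<forall>\<rho>\<in>Rows t gl. \<forall>X. finite X \<longrightarrow> (\<Sum>x\<in>X. (\<rho> x)^2) \<le> 4"
proof (intro ballI allI impI)
  fix \<rho> and X :: "(nat \<times> nat) set" assume r: "\<rho> \<in> Rows t gl" and X: "finite X"
  then obtain i f j s c where d: "\<rho> = rowv (i,c) (i, quad_type c f) (j, s c) (j, quad_type (s c) (s f))"
    "i < t" "f < 4" "gl i f = Some (j, s)" "c < 4" "c \<noteq> f"
    unfolding Rows_def by blast
  have bij: "bij_betw s {..<4} {..<4}" using assms d unfolding valid_gluing_def by blast
  then have "s c < 4" "s f < 4" "s c \<noteq> s f" using d(3,5,6)
    by (auto simp: bij_betw_def inj_on_def)
  then have "s c \<noteq> quad_type (s c) (s f)" using quad_ge[of "s c" "s f"] by auto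
  moreover have "c \<noteq> quad_type c f" using quad_ge[of c f] d by auto
  ultimately show "(\<Sum>x\<in>X. (\<rho> x)^2) \<le> 4" unfolding d(1) by (intro rowv_norm X) auto
qed

lemma finite_coord: "finite (coord_index t)"
  by (simp add: coord_index_def)

lemma card_coord: "card (coord_index t) = 7 * t"
  by (simp add: coord_index_def card_cartesian_product)

lemma cone_supp: "v \<in> haken_cone t gl \<Longrightarrow> supp v \<subseteq> coord_index t"
  unfolding haken_cone_def supp_def by auto

lemma cone_nonneg:
  assumes "v \<in> haken_cone t gl" shows "0 \<le> v x"
proof -
  have h1: "\<forall>x. x \<notin> coord_index t \<longrightarrow> v x = 0" and h2: "\<forall>x\<in>coord_index t. 0 \<le> v x"
    using assms unfolding haken_cone_def by blast+
  show ?thesis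
  proof (cases "x \<in> coord_index t")
    case True then show ?thesis using h2 by blast
  next
    case False then have "v x = 0" using h1 by blast
    then show ?thesis by simp
  qed
qed

lemma matching_lin: "matching t gl v \<Longrightarrow> matching t gl w \<Longrightarrow> matching t gl (\<lambda>x. a * v x + b * w x)"
  unfolding matching_def
proof (intro allI impI)
  fix i f j s c
  assume mv: "\<forall>i<t. \<forall>f<4. \<forall>j s. gl i f = Some (j, s) \<longrightarrow> (\<forall>c<4. c \<noteq> f \<longrightarrow> v (i, c) + v (i, quad_type c f) = v (j, s c) + v (j, quad_type (s c) (s f)))"
    and mw: "\<forall>i<t. \<forall>f<4. \<forall>j s. gl i f = Some (j, s) \<longrightarrow> (\<forall>c<4. c \<noteq> f \<longrightarrow> w (i, c) + w (i, quad_type c f) = w (j, s c) + w (j, quad_type (s c) (s f)))"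
    and h: "i < t" "f < 4" "gl i f = Some (j, s)" "c < 4" "c \<noteq> f"
  have e1: "v (i, c) + v (i, quad_type c f) = v (j, s c) + v (j, quad_type (s c) (s f))" using mv h by blast
  have e2: "w (i, c) + w (i, quad_type c f) = w (j, s c) + w (j, quad_type (s c) (s f))" using mw h by blast
  have "a * (v (i, c) + v (i, quad_type c f)) + b * (w (i, c) + w (i, quad_type c f)) =
        a * (v (j, s c) + v (j, quad_type (s c) (s f))) + b * (w (j, s c) + w (j, quad_type (s c) (s f)))"
    using e1 e2 by simp
  then show "a * v (i, c) + b * w (i, c) + (a * v (i, quad_type c f) + b * w (i, quad_type c f)) =
       a * v (j, s c) + b * w (j, s c) + (a * v (j, quad_type (s c) (s f)) + b * w (j, quad_type (s c) (s f)))"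
    by (simp add: algebra_simps)
qed

lemma cone_comb:
  assumes "v \<in> haken_cone t gl" "w \<in> haken_cone t gl" "matching t gl w"
    and "\<forall>x\<in>coord_index t. 0 \<le> a * v x + b * w x"
    and "\<forall>x. x \<notin> coord_index t \<longrightarrow> w x = 0"
  shows "(\<lambda>x. a * v x + b * w x) \<in> haken_cone t gl"
  using assms matching_lin[of t gl v w a b] unfolding haken_cone_def by auto

lemma cone_intro:
  "(\<forall>x. x \<notin> coord_index t \<longrightarrow> v x = 0) \<Longrightarrow> (\<forall>x. 0 \<le> v x) \<Longrightarrow> matching t gl v \<Longrightarrow> v \<in> haken_cone t gl"
  unfolding haken_cone_def mem_Collect_eq by blast

lemma cone_out: "v \<in> haken_cone t gl \<Longrightarrow> x \<notin> coord_index t \<Longrightarrow> v x = 0"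
  unfolding haken_cone_def mem_Collect_eq by blast

lemma cone_matching: "v \<in> haken_cone t gl \<Longrightarrow> matching t gl v"
  unfolding haken_cone_def mem_Collect_eq by blast

lemma finite_supp: "v \<in> haken_cone t gl \<Longrightarrow> finite (supp v)"
  using finite_subset[OF cone_supp finite_coord] by blast

lemma min_ex: "finite J \<Longrightarrow> J \<noteq> {} \<Longrightarrow> \<exists>x0\<in>J. \<forall>x\<in>J. (f x0::real) \<le> f x"
proof -
  assume "finite J" "J \<noteq> {}"
  then have "Min (f ` J) \<in> f ` J" by (intro Min_in) auto
  then obtain x0 where "x0 \<in> J" "f x0 = Min (f ` J)" by auto
  moreover have "\<forall>x\<in>J. Min (f ` J) \<le> f x" using \<open>finite J\<close> by simp
  ultimately show ?thesis by metis
qed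

lemma circuit_one_pos:
  assumes w: "w \<in> haken_cone t gl"
    and circ: "\<forall>z\<in>haken_cone t gl. (\<exists>x. z x \<noteq> 0) \<longrightarrow> supp z \<subseteq> supp w \<longrightarrow> supp z = supp w"
    and y0: "\<forall>x. x \<notin> supp w \<longrightarrow> y x = 0" and ym: "matching t gl y"
    and pos: "\<exists>x. y x > 0"
  shows "\<exists>c. \<forall>x. y x = c * w x"
proof -
  define J where "J = {x \<in> supp w. y x > 0}"
  obtain x1 where x1: "y x1 > 0" using pos by blast
  have "x1 \<in> supp w"
  proof (rule ccontr)
    assume "x1 \<notin> supp w"
    then have "y x1 = 0" using y0 by blast
    with x1 show False by simp
  qed
  then have "x1 \<in> J" using x1 unfolding J_def by blast
  moreover have "finite J" using finite_supp[OF w] unfolding J_def by simp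
  ultimately have J: "finite J" "J \<noteq> {}" by auto
  obtain x0 where x0: "x0 \<in> J" "\<forall>x\<in>J. w x0 / y x0 \<le> w x / y x"
    using min_ex[OF J, of "\<lambda>x. w x / y x"] by blast
  define \<mu> where "\<mu> = w x0 / y x0"
  have wx0: "w x0 > 0" using x0(1) cone_nonneg[OF w, of x0] unfolding J_def supp_def by auto
  have yx0: "y x0 > 0" using x0(1) unfolding J_def by auto
  have mu: "\<mu> > 0" using wx0 yx0 by (simp add: \<mu>_def)
  define z where "z = (\<lambda>x. 1 * w x + (- \<mu>) * y x)"
  have zC: "z \<in> haken_cone t gl"
  proof (rule cone_intro)
    show "\<forall>x. x \<notin> coord_index t \<longrightarrow> z x = 0"
    proof (intro allI impI)
      fix x assume x: "x \<notin> coord_index t"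
      then have "x \<notin> supp w" using cone_supp[OF w] by blast
      then have "y x = 0" using y0 by blast
      moreover have "w x = 0" using cone_out[OF w x] .
      ultimately show "z x = 0" unfolding z_def by simp
    qed
    show "matching t gl z" unfolding z_def by (rule matching_lin[OF cone_matching[OF w] ym])
    show "\<forall>x. 0 \<le> z x"
    proof
      fix x
      show "0 \<le> z x"
      proof (cases "x \<in> J")
        case True
        have m1: "\<mu> \<le> w x / y x" using x0(2) True unfolding \<mu>_def by blast
        have m2: "y x > 0" using True unfolding J_def by blast
        from m1 m2 have "\<mu> * y x \<le> w x" using pos_le_divide_eq[of "y x" \<mu> "w x"] by simp
        then show ?thesis unfolding z_def by simp
      next
        case False
        have "y x \<le> 0"
        proof (cases "x \<in> supp w")
          case True
          then show ?thesis using False unfolding J_def by auto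
        next
          case False2: False
          then have "y x = 0" using y0 by blast
          then show ?thesis by simp
        qed
        then have "\<mu> * y x \<le> 0" using mu by (simp add: mult_nonneg_nonpos)
        then show ?thesis using cone_nonneg[OF w, of x] unfolding z_def by simp
      qed
    qed
  qed
  have "supp z \<subseteq> supp w"
  proof
    fix x assume "x \<in> supp z"
    show "x \<in> supp w"
    proof (rule ccontr)
      assume "x \<notin> supp w"
      then have "y x = 0" "w x = 0" using y0 unfolding supp_def by blast+
      then have "z x = 0" unfolding z_def by simp
      then show False using \<open>x \<in> supp z\<close> unfolding supp_def by simp
    qed
  qed
  moreover have "x0 \<notin> supp z" using yx0 unfolding z_def supp_def \<mu>_def by simp
  moreover have "x0 \<in> supp w" using x0(1) unfolding J_def by simp
  ultimately have "\<not> (\<exists>x. z x \<noteq> 0)" using circ zC by blast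
  then have "\<forall>x. y x = (1 / \<mu>) * w x" using mu unfolding z_def by (auto simp: field_simps)
  then show ?thesis by blast
qed

lemma circuit_one:
  assumes w: "w \<in> haken_cone t gl"
    and circ: "\<forall>z\<in>haken_cone t gl. (\<exists>x. z x \<noteq> 0) \<longrightarrow> supp z \<subseteq> supp w \<longrightarrow> supp z = supp w"
    and y0: "\<forall>x. x \<notin> supp w \<longrightarrow> y x = 0" and ym: "matching t gl y"
  shows "\<exists>c. \<forall>x. y x = c * w x"
proof (cases "\<exists>x. y x > 0")
  case True then show ?thesis using circuit_one_pos[OF w circ y0 ym] by blast
next
  case False
  show ?thesis
  proof (cases "\<exists>x. y x < 0")
    case True
    have m: "matching t gl (\<lambda>x. (-1) * y x + 0 * y x)" by (rule matching_lin[OF ym ym])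
    have "\<exists>c. \<forall>x. (-1) * y x + 0 * y x = c * w x"
      by (rule circuit_one_pos[OF w circ _ m]) (use y0 True in auto)
    then obtain c where c: "\<forall>x. (-1) * y x + 0 * y x = c * w x" by blast
    have "\<forall>x. y x = (- c) * w x"
    proof
      fix x have "(-1) * y x + 0 * y x = c * w x" using c by blast
      then show "y x = (- c) * w x" by simp
    qed
    then show ?thesis by blast
  next
    case False2: False
    have "\<forall>x. y x = 0 * w x"
    proof
      fix x have "\<not> y x > 0" "\<not> y x < 0" using False False2 by blast+
      then show "y x = 0 * w x" by simp
    qed
    then show ?thesis by blast
  qed
qed

lemma extreme_supp:
  assumes ext: "extreme_ray_vec (haken_cone t gl) v"
    and w: "w \<in> haken_cone t gl" and sub: "supp w \<subseteq> supp v"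
  shows "\<exists>c\<ge>0. w = (\<lambda>x. c * v x)"
proof (cases "supp w = {}")
  case True
  then have "w = (\<lambda>x. 0 * v x)" unfolding supp_def by auto
  then show ?thesis by blast
next
  case False
  have vC: "v \<in> haken_cone t gl" using ext unfolding extreme_ray_vec_def by blast
  obtain x0 where x0: "x0 \<in> supp w" "\<forall>x\<in>supp w. v x0 / w x0 \<le> v x / w x"
    using min_ex[OF finite_supp[OF w] False, of "\<lambda>x. v x / w x"] by blast
  define \<epsilon> where "\<epsilon> = v x0 / w x0"
  have wx0: "w x0 > 0" using x0(1) cone_nonneg[OF w, of x0] unfolding supp_def by auto
  have vx0: "v x0 > 0" using x0(1) sub cone_nonneg[OF vC, of x0] unfolding supp_def by auto
  have eps: "\<epsilon> > 0" using wx0 vx0 by (simp add: \<epsilon>_def)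
  define a where "a = (\<lambda>x. 1 * v x + (- \<epsilon>) * w x)"
  define b where "b = (\<lambda>x. \<epsilon> * w x + 0 * w x)"
  have aC: "a \<in> haken_cone t gl"
  proof (rule cone_intro)
    show "\<forall>x. x \<notin> coord_index t \<longrightarrow> a x = 0"
      using cone_out[OF w] cone_out[OF vC] unfolding a_def by auto
    show "matching t gl a" unfolding a_def by (rule matching_lin[OF cone_matching[OF vC] cone_matching[OF w]])
    show "\<forall>x. 0 \<le> a x"
    proof
      fix x
      show "0 \<le> a x"
      proof (cases "x \<in> supp w")
        case True
        have e1: "\<epsilon> \<le> v x / w x" using x0(2) True unfolding \<epsilon>_def by blast
        have "w x \<noteq> 0" using True unfolding supp_def by blast
        then have e2: "w x > 0" using cone_nonneg[OF w, of x] by simp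
        from e1 e2 have "\<epsilon> * w x \<le> v x" using pos_le_divide_eq[of "w x" \<epsilon> "v x"] by simp
        then show ?thesis unfolding a_def by simp
      next
        case False
        then show ?thesis using cone_nonneg[OF vC, of x] unfolding a_def supp_def by simp
      qed
    qed
  qed
  have bC: "b \<in> haken_cone t gl"
  proof (rule cone_intro)
    show "\<forall>x. x \<notin> coord_index t \<longrightarrow> b x = 0"
      using cone_out[OF w] unfolding b_def by auto
    show "matching t gl b" unfolding b_def by (rule matching_lin[OF cone_matching[OF w] cone_matching[OF w]])
    show "\<forall>x. 0 \<le> b x" using eps cone_nonneg[OF w] unfolding b_def by simp
  qed
  have "(\<lambda>x. a x + b x) = v" unfolding a_def b_def by auto
  then obtain c where c: "c \<ge> 0" "b = (\<lambda>x. c * v x)" using ext aC bC unfolding extreme_ray_vec_def by blast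
  have "w = (\<lambda>x. (c / \<epsilon>) * v x)"
  proof
    fix x
    have "b x = c * v x" using c(2) by simp
    then have "\<epsilon> * w x = c * v x" unfolding b_def by simp
    then show "w x = (c / \<epsilon>) * v x" using eps by (auto simp: field_simps)
  qed
  then show ?thesis using c(1) eps by (intro exI[of _ "c / \<epsilon>"]) auto
qed

lemma part1:
  shows "finite {v. min_vertex_solution (haken_cone t gl) v} \<and>
         card {v. min_vertex_solution (haken_cone t gl) v} \<le> 2 ^ (7 * t)"
proof -
  let ?C = "haken_cone t gl"
  let ?M = "{v. min_vertex_solution ?C v}"
  have inj: "inj_on supp ?M"
  proof (rule inj_onI)
    fix u v assume u: "u \<in> ?M" and v: "v \<in> ?M" and s: "supp u = supp v"
    have eu: "extreme_ray_vec ?C u" and ev: "extreme_ray_vec ?C v"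
      using u v unfolding min_vertex_solution_def by auto
    have vC: "v \<in> ?C" and vnz: "v \<noteq> (\<lambda>x. 0)" using ev unfolding extreme_ray_vec_def by auto
    obtain c where c: "c \<ge> 0" "v = (\<lambda>x. c * u x)" using extreme_supp[OF eu vC] s by auto
    have "c \<noteq> 0" using vnz c by auto
    have iu: "integral_vec u" and iv: "integral_vec v"
      and mu: "\<forall>c. 0 < c \<and> c < 1 \<longrightarrow> \<not> integral_vec (\<lambda>x. c * u x)"
      and mv: "\<forall>c. 0 < c \<and> c < 1 \<longrightarrow> \<not> integral_vec (\<lambda>x. c * v x)"
      using u v unfolding min_vertex_solution_def by auto
    have "\<not> c < 1" using mu iv c \<open>c \<noteq> 0\<close> by auto
    moreover have "\<not> c > 1"
    proof
      assume "c > 1"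
      have eq: "(\<lambda>x. (1/c) * v x) = u" using c \<open>c > 1\<close> by auto
      have "integral_vec (\<lambda>x. (1/c) * v x)" unfolding eq by (rule iu)
      moreover have "0 < 1/c" "1/c < 1" using \<open>c > 1\<close> by auto
      ultimately show False using mv by blast
    qed
    ultimately have "c = 1" by simp
    then show "u = v" using c by simp
  qed
  have sub: "supp ` ?M \<subseteq> Pow (coord_index t)"
    using cone_supp unfolding min_vertex_solution_def extreme_ray_vec_def by blast
  have fin: "finite (supp ` ?M)" using finite_subset[OF sub] finite_coord by simp
  have "finite ?M" using finite_imageD[OF fin inj] .
  moreover have "card ?M \<le> 2 ^ (7 * t)"
  proof -
    have "card ?M = card (supp ` ?M)" using card_image[OF inj] by simp
    also have "\<dots> \<le> card (Pow (coord_index t))" by (rule card_mono) (use sub finite_coord in auto)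
    also have "\<dots> = 2 ^ (7 * t)" using finite_coord card_coord by (simp add: card_Pow)
    finally show ?thesis .
  qed
  ultimately show ?thesis by blast
qed

definition good :: "nat \<Rightarrow> gluing \<Rightarrow> (nat \<times> nat \<Rightarrow> real) \<Rightarrow> bool" where
  "good t gl g \<longleftrightarrow> g \<in> haken_cone t gl \<and> integral_vec g \<and> g \<noteq> (\<lambda>x. 0) \<and> (\<forall>x. g x \<le> 2 ^ (7 * t - 1))"

lemma matching_scale: "matching t gl v \<Longrightarrow> matching t gl (\<lambda>x. a * v x)"
  using matching_lin[of t gl v v a 0] by simp

lemma matching_add: "matching t gl v \<Longrightarrow> matching t gl w \<Longrightarrow> matching t gl (\<lambda>x. v x + w x)"
  using matching_lin[of t gl v w 1 1] by simp

lemma cone_scale: "v \<in> haken_cone t gl \<Longrightarrow> 0 \<le> c \<Longrightarrow> (\<lambda>x. c * v x) \<in> haken_cone t gl"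
  by (rule cone_intro) (auto simp: cone_out cone_nonneg matching_scale cone_matching)

lemma cone_add: "v \<in> haken_cone t gl \<Longrightarrow> w \<in> haken_cone t gl \<Longrightarrow> (\<lambda>x. v x + w x) \<in> haken_cone t gl"
  by (rule cone_intro) (auto simp: cone_out cone_nonneg matching_add cone_matching add_nonneg_nonneg)

lemma cone_zero: "(\<lambda>x. 0) \<in> haken_cone t gl"
  by (rule cone_intro) (auto simp: matching_def)

lemma cone_combo:
  "(\<forall>p\<in>set qs. fst p \<in> haken_cone t gl \<and> 0 \<le> snd p) \<Longrightarrow> (\<lambda>x. \<Sum>p\<leftarrow>qs. snd p * fst p x) \<in> haken_cone t gl"
proof (induction qs)
  case Nil then show ?case using cone_zero by simp
next
  case (Cons q qs)
  have "(\<lambda>x. snd q * fst q x) \<in> haken_cone t gl" using Cons.prems by (intro cone_scale) auto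
  moreover have "(\<lambda>x. \<Sum>p\<leftarrow>qs. snd p * fst p x) \<in> haken_cone t gl" using Cons by auto
  ultimately show ?case using cone_add by fastforce
qed

lemma circuit_good:
  assumes vg: "valid_gluing t gl" and w: "w \<in> haken_cone t gl" and wnz: "\<exists>x. w x \<noteq> 0"
    and circ: "\<forall>z\<in>haken_cone t gl. (\<exists>x. z x \<noteq> 0) \<longrightarrow> supp z \<subseteq> supp w \<longrightarrow> supp z = supp w"
  shows "\<exists>g. good t gl g \<and> supp g \<subseteq> supp w"
proof -
  let ?S = "supp w"
  have fS: "finite ?S" using finite_supp[OF w] .
  have "?S \<noteq> {}" using wnz unfolding supp_def by auto
  then obtain k where k: "card ?S = Suc k" using fS by (metis card_gt_0_iff gr0_implies_Suc)
  have "card ?S \<le> 7 * t" using card_mono[OF finite_coord cone_supp[OF w]] card_coord by simp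
  then have k7: "k \<le> 7 * t - 1" using k by simp
  have w0: "\<forall>x. x \<notin> ?S \<longrightarrow> w x = 0" unfolding supp_def by blast
  have wS: "\<forall>x\<in>?S. w x \<noteq> 0" unfolding supp_def by blast
  have wker: "\<forall>\<rho>\<in>Rows t gl. (\<Sum>x\<in>?S. \<rho> x * w x) = 0"
    using matching_rows[OF fS w0] cone_matching[OF w] by blast
  have one: "\<forall>y. (\<forall>x. x \<notin> ?S \<longrightarrow> y x = 0) \<longrightarrow> (\<forall>\<rho>\<in>Rows t gl. (\<Sum>x\<in>?S. \<rho> x * y x) = 0) \<longrightarrow> (\<exists>c. \<forall>x. y x = c * w x)"
  proof (intro allI impI)
    fix y assume y0: "\<forall>x. x \<notin> ?S \<longrightarrow> y x = 0" and yk: "\<forall>\<rho>\<in>Rows t gl. (\<Sum>x\<in>?S. \<rho> x * y x) = 0"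
    have "matching t gl y" using matching_rows[OF fS y0] yk by blast
    then show "\<exists>c. \<forall>x. y x = c * w x" using circuit_one[OF w circ y0] by blast
  qed
  obtain y where y: "\<forall>x. x \<notin> ?S \<longrightarrow> y x = 0" "\<forall>\<rho>\<in>Rows t gl. (\<Sum>x\<in>?S. \<rho> x * y x) = 0"
    "\<exists>x. y x \<noteq> 0" "\<forall>x. y x \<in> \<int>" "\<forall>x. \<bar>y x\<bar> \<le> 2 ^ k"
    using circuit_int_vec[OF fS k wS wker one Rows_int Rows_norm[OF vg]] by blast
  obtain c where c: "\<forall>x. y x = c * w x" using one y(1,2) by blast
  define g where "g = (\<lambda>x. \<bar>c\<bar> * w x)"
  have gy: "g x = \<bar>y x\<bar>" for x
  proof -
    have "y x = c * w x" using c by blast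
    then show ?thesis using cone_nonneg[OF w, of x] unfolding g_def by (simp add: abs_mult)
  qed
  have gC: "g \<in> haken_cone t gl" unfolding g_def by (rule cone_scale[OF w]) simp
  have gi: "integral_vec g" unfolding integral_vec_def gy using y(4) by (simp add: Ints_abs)
  have gnz: "g \<noteq> (\<lambda>x. 0)"
  proof
    assume "g = (\<lambda>x. 0)"
    then have "\<forall>x. y x = 0" using gy by (metis abs_eq_0)
    then show False using y(3) by blast
  qed
  have gb: "\<forall>x. g x \<le> 2 ^ (7 * t - 1)"
  proof
    fix x
    have "\<bar>y x\<bar> \<le> 2 ^ k" using y(5) by blast
    then have "g x \<le> 2 ^ k" using gy[of x] by simp
    also have "(2::real) ^ k \<le> 2 ^ (7 * t - 1)" by (rule power_increasing[OF k7]) simp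
    finally show "g x \<le> 2 ^ (7 * t - 1)" .
  qed
  have "supp g \<subseteq> supp w" unfolding supp_def g_def by auto
  then show ?thesis using gC gi gnz gb unfolding good_def by blast
qed

lemma ratio_sub:
  assumes v: "v \<in> haken_cone t gl" and g: "g \<in> haken_cone t gl" and sub: "supp g \<subseteq> supp v"
    and ne: "supp g \<noteq> {}"
  shows "\<exists>lam>0. \<exists>x0\<in>supp v. (\<lambda>x. v x - lam * g x) \<in> haken_cone t gl \<and> v x0 - lam * g x0 = 0"
proof -
  obtain x0 where x0: "x0 \<in> supp g" "\<forall>x\<in>supp g. v x0 / g x0 \<le> v x / g x"
    using min_ex[OF finite_supp[OF g] ne, of "\<lambda>x. v x / g x"] by blast
  define \<epsilon> where "\<epsilon> = v x0 / g x0"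
  have gx0: "g x0 > 0" using x0(1) cone_nonneg[OF g, of x0] unfolding supp_def by auto
  have vx0: "v x0 > 0" using x0(1) sub cone_nonneg[OF v, of x0] unfolding supp_def by auto
  have eps: "\<epsilon> > 0" using gx0 vx0 by (simp add: \<epsilon>_def)
  define a where "a = (\<lambda>x. 1 * v x + (- \<epsilon>) * g x)"
  have aC: "a \<in> haken_cone t gl"
  proof (rule cone_intro)
    show "\<forall>x. x \<notin> coord_index t \<longrightarrow> a x = 0"
      using cone_out[OF g] cone_out[OF v] unfolding a_def by auto
    show "matching t gl a" unfolding a_def by (rule matching_lin[OF cone_matching[OF v] cone_matching[OF g]])
    show "\<forall>x. 0 \<le> a x"
    proof
      fix x
      show "0 \<le> a x"
      proof (cases "x \<in> supp g")
        case True
        have e1: "\<epsilon> \<le> v x / g x" using x0(2) True unfolding \<epsilon>_def by blast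
        have "g x \<noteq> 0" using True unfolding supp_def by blast
        then have e2: "g x > 0" using cone_nonneg[OF g, of x] by simp
        from e1 e2 have "\<epsilon> * g x \<le> v x" using pos_le_divide_eq[of "g x" \<epsilon> "v x"] by simp
        then show ?thesis unfolding a_def by simp
      next
        case False
        then have "g x = 0" unfolding supp_def by blast
        then show ?thesis using cone_nonneg[OF v, of x] unfolding a_def by simp
      qed
    qed
  qed
  have "a = (\<lambda>x. v x - \<epsilon> * g x)" unfolding a_def by auto
  moreover have "v x0 - \<epsilon> * g x0 = 0" using gx0 unfolding \<epsilon>_def by simp
  moreover have "x0 \<in> supp v" using x0(1) sub by blast
  ultimately show ?thesis using aC eps by blast
qed

lemma decomp:
  assumes vg: "valid_gluing t gl"
  shows "v \<in> haken_cone t gl \<Longrightarrow> \<exists>gs. length gs \<le> card (supp v) \<and> (\<forall>p\<in>set gs. good t gl (fst p) \<and> 0 \<le> snd p) \<and>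
            (\<forall>x. v x = (\<Sum>p\<leftarrow>gs. snd p * fst p x))"
proof (induction "card (supp v)" arbitrary: v rule: less_induct)
  case less
  note vC = less.prems
  show ?case
  proof (cases "supp v = {}")
    case True
    then have "\<forall>x. v x = 0" unfolding supp_def by auto
    then show ?thesis by (intro exI[of _ "[]"]) simp
  next
    case False
    let ?Z = "\<lambda>z. z \<in> haken_cone t gl \<and> (\<exists>x. z x \<noteq> 0) \<and> supp z \<subseteq> supp v"
    have "?Z v" using vC False unfolding supp_def by auto
    then obtain z0 where z0: "?Z z0" "\<forall>z. ?Z z \<longrightarrow> card (supp z0) \<le> card (supp z)"
      using ex_has_least_nat[of ?Z v "\<lambda>z. card (supp z)"] by blast
    have circ: "\<forall>z\<in>haken_cone t gl. (\<exists>x. z x \<noteq> 0) \<longrightarrow> supp z \<subseteq> supp z0 \<longrightarrow> supp z = supp z0"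
    proof (intro ballI impI)
      fix z assume zC: "z \<in> haken_cone t gl" and znz: "\<exists>x. z x \<noteq> 0" and zs: "supp z \<subseteq> supp z0"
      then have "?Z z" using z0(1) by blast
      then have "card (supp z0) \<le> card (supp z)" using z0(2) by blast
      then show "supp z = supp z0" using card_seteq[OF finite_supp[OF conjunct1[OF z0(1)]] zs] by simp
    qed
    obtain g where g: "good t gl g" "supp g \<subseteq> supp z0"
      using circuit_good[OF vg _ _ circ] z0(1) by blast
    have gC: "g \<in> haken_cone t gl" using g(1) unfolding good_def by blast
    have gsub: "supp g \<subseteq> supp v" using g(2) z0(1) by blast
    have gne: "supp g \<noteq> {}"
    proof
      assume "supp g = {}"
      then have "g = (\<lambda>x. 0)" unfolding supp_def by auto
      then show False using g(1) unfolding good_def by blast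
    qed
    obtain lam x0 where lx: "lam > 0" "x0 \<in> supp v" "(\<lambda>x. v x - lam * g x) \<in> haken_cone t gl" "v x0 - lam * g x0 = 0"
      using ratio_sub[OF vC gC gsub gne] by blast
    let ?v' = "\<lambda>x. v x - lam * g x"
    have "supp ?v' \<subseteq> supp v - {x0}"
    proof
      fix x assume x: "x \<in> supp ?v'"
      have "x \<noteq> x0" using x lx(4) unfolding supp_def by auto
      moreover have "x \<in> supp v"
      proof (rule ccontr)
        assume "x \<notin> supp v"
        then have "v x = 0" "g x = 0" using gsub unfolding supp_def by auto
        then show False using x unfolding supp_def by simp
      qed
      ultimately show "x \<in> supp v - {x0}" by blast
    qed
    then have "card (supp ?v') \<le> card (supp v - {x0})"
      by (intro card_mono) (use finite_supp[OF vC] in auto)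
    also have "\<dots> < card (supp v)" using lx(2) finite_supp[OF vC] by (metis card_Diff1_less)
    finally have lt: "card (supp ?v') < card (supp v)" .
    obtain gs where gs: "length gs \<le> card (supp ?v')" "\<forall>p\<in>set gs. good t gl (fst p) \<and> 0 \<le> snd p"
      "\<forall>x. ?v' x = (\<Sum>p\<leftarrow>gs. snd p * fst p x)"
      using less.hyps[OF lt lx(3)] by blast
    show ?thesis
    proof (intro exI[of _ "(g, lam) # gs"] conjI)
      show "length ((g, lam) # gs) \<le> card (supp v)" using gs(1) lt by simp
      show "\<forall>p\<in>set ((g, lam) # gs). good t gl (fst p) \<and> 0 \<le> snd p" using gs(2) g(1) lx(1) by auto
      show "\<forall>x. v x = (\<Sum>p\<leftarrow>(g, lam) # gs. snd p * fst p x)"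
      proof
        fix x
        have "v x = lam * g x + ?v' x" by simp
        then show "v x = (\<Sum>p\<leftarrow>(g, lam) # gs. snd p * fst p x)" using gs(3) by simp
      qed
    qed
  qed
qed

lemma sum_list_le_len: "(\<forall>p\<in>set xs. f p \<le> (B::real)) \<Longrightarrow> (\<Sum>p\<leftarrow>xs. f p) \<le> real (length xs) * B"
  by (induction xs) (auto simp: algebra_simps)

lemma hb_bound:
  assumes vg: "valid_gluing t gl" and h: "h \<in> min_hilbert_basis (haken_cone t gl)"
  shows "h x \<le> real (7 * t * 2 ^ (7 * t - 1))"
proof -
  let ?C = "haken_cone t gl"
  let ?B = "(2::real) ^ (7 * t - 1)"
  have hC: "h \<in> ?C" and hi: "integral_vec h" and hnz: "h \<noteq> (\<lambda>x. 0)"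
    and hmin: "\<not> (\<exists>a b. a \<in> ?C \<and> b \<in> ?C \<and> integral_vec a \<and> integral_vec b \<and>
               a \<noteq> (\<lambda>x. 0) \<and> b \<noteq> (\<lambda>x. 0) \<and> h = (\<lambda>x. a x + b x))"
    using h unfolding min_hilbert_basis_def by blast+
  have t1: "1 \<le> t"
  proof (rule ccontr)
    assume "\<not> 1 \<le> t"
    then have "t = 0" by simp
    then have "coord_index t = {}" by (simp add: coord_index_def)
    then have "h = (\<lambda>x. 0)" using cone_out[OF hC] by auto
    then show False using hnz by blast
  qed
  have cs: "card (supp h) \<le> 7 * t" using card_mono[OF finite_coord cone_supp[OF hC]] card_coord by simp
  obtain gs where gs: "length gs \<le> card (supp h)" "\<forall>p\<in>set gs. good t gl (fst p) \<and> 0 \<le> snd p"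
    "\<forall>x. h x = (\<Sum>p\<leftarrow>gs. snd p * fst p x)"
    using decomp[OF vg hC] by blast
  have Bpos: "?B \<le> real (7 * t) * ?B" using t1 by simp
  show ?thesis
  proof (cases "\<exists>p\<in>set gs. 1 \<le> snd p")
    case True
    then obtain p where p: "p \<in> set gs" "1 \<le> snd p" by blast
    define g where "g = fst p"
    have gg: "good t gl g" using gs(2) p(1) unfolding g_def by blast
    then have gC: "g \<in> ?C" and gi: "integral_vec g" and gnz: "g \<noteq> (\<lambda>x. 0)" and gb: "\<forall>x. g x \<le> ?B"
      unfolding good_def by blast+
    define R where "R = (\<lambda>x. \<Sum>q\<leftarrow>remove1 p gs. snd q * fst q x)"
    have RC: "R \<in> ?C" unfolding R_def
      by (rule cone_combo) (use gs(2) in \<open>auto simp: good_def dest: set_remove1_subset[THEN subsetD]\<close>)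
    have hx: "h x = snd p * g x + R x" for x
    proof -
      have "h x = (\<Sum>q\<leftarrow>gs. snd q * fst q x)" using gs(3) by blast
      then show ?thesis using sum_list_map_remove1[OF p(1), of "\<lambda>q. snd q * fst q x"] unfolding R_def g_def by simp
    qed
    define d where "d = (\<lambda>x. h x - g x)"
    have d_eq: "d = (\<lambda>x. (snd p - 1) * g x + R x)" unfolding d_def using hx by (auto simp: algebra_simps)
    have dC: "d \<in> ?C" unfolding d_eq by (rule cone_add[OF cone_scale[OF gC] RC]) (use p in simp)
    have di: "integral_vec d" using hi gi unfolding integral_vec_def d_def by (auto intro: Ints_diff)
    have hgd: "h = (\<lambda>x. g x + d x)" unfolding d_def by simp
    have "d = (\<lambda>x. 0)" using hmin gC dC gi di gnz hgd by blast
    then have "h x = g x" using hgd by (metis add.right_neutral)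
    also have "\<dots> \<le> ?B" using gb by blast
    also have "\<dots> \<le> real (7 * t) * ?B" by (rule Bpos)
    finally show ?thesis by simp
  next
    case False
    have "h x = (\<Sum>p\<leftarrow>gs. snd p * fst p x)" using gs(3) by blast
    also have "\<dots> \<le> real (length gs) * ?B"
    proof (rule sum_list_le_len, rule ballI)
      fix p assume p: "p \<in> set gs"
      have gd: "good t gl (fst p)" "0 \<le> snd p" using gs(2) p by auto
      have "snd p < 1" using False p by auto
      have g0: "0 \<le> fst p x" using cone_nonneg gd(1) unfolding good_def by blast
      have "fst p x \<le> ?B" using gd(1) unfolding good_def by blast
      have "snd p * fst p x \<le> 1 * fst p x"
        by (rule mult_right_mono) (use \<open>snd p < 1\<close> g0 in auto)
      then show "snd p * fst p x \<le> ?B" using \<open>fst p x \<le> ?B\<close> by simp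
    qed
    also have "\<dots> \<le> real (7 * t) * ?B"
      by (rule mult_right_mono) (use gs(1) cs in auto)
    finally show ?thesis by simp
  qed
qed

lemma arith_bound: "((7 * t * 2 ^ (7 * t - 1) + 1) ^ (7 * t) :: nat) \<le> t ^ (7 * t) * 2 ^ (49 * t\<^sup>2 + 14 * t)"
proof (cases "t = 0")
  case True then show ?thesis by simp
next
  case False
  obtain m where m: "7 * t = Suc m" using False by (metis mult_is_0 not0_implies_Suc zero_neq_numeral)
  have e: "(2::nat) ^ (7 * t + 2) = 8 * 2 ^ (7 * t - 1)"
    unfolding m by simp
  have "7 * t * 2 ^ (7 * t - 1) + 1 \<le> t * 2 ^ (7 * t + 2)"
  proof -
    have "1 \<le> t * 2 ^ (7 * t - 1)" using False by simp
    then show ?thesis unfolding e by simp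
  qed
  then have "(7 * t * 2 ^ (7 * t - 1) + 1) ^ (7 * t) \<le> (t * 2 ^ (7 * t + 2)) ^ (7 * t)"
    by (rule power_mono) simp
  also have "\<dots> = t ^ (7 * t) * (2 ^ (7 * t + 2)) ^ (7 * t)"
    by (simp only: power_mult_distrib)
  also have "((2::nat) ^ (7 * t + 2)) ^ (7 * t) = 2 ^ ((7 * t + 2) * (7 * t))"
    by (rule power_mult[symmetric])
  also have "(7 * t + 2) * (7 * t) = 49 * t\<^sup>2 + 14 * t" by (simp add: power2_eq_square algebra_simps)
  finally show ?thesis .
qed

lemma part2:
  assumes vg: "valid_gluing t gl"
  shows "finite (min_hilbert_basis (haken_cone t gl)) \<and>
         card (min_hilbert_basis (haken_cone t gl)) \<le> t ^ (7 * t) * 2 ^ (49 * t\<^sup>2 + 14 * t)"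
proof -
  let ?H = "min_hilbert_basis (haken_cone t gl)"
  let ?I = "coord_index t"
  let ?N = "7 * t * 2 ^ (7 * t - 1) :: nat"
  let ?F = "\<lambda>f :: nat \<times> nat \<Rightarrow> nat. (\<lambda>x. if x \<in> ?I then real (f x) else 0)"
  let ?P = "PiE ?I (\<lambda>_. {0..?N})"
  have sub: "?H \<subseteq> ?F ` ?P"
  proof
    fix h assume h: "h \<in> ?H"
    have hC: "h \<in> haken_cone t gl" and hi: "integral_vec h" using h unfolding min_hilbert_basis_def by auto
    define f where "f = restrict (\<lambda>x. nat \<lfloor>h x\<rfloor>) ?I"
    have hf: "real (nat \<lfloor>h x\<rfloor>) = h x" for x
    proof -
      obtain n where n: "h x = of_int n" using hi unfolding integral_vec_def by (metis Ints_cases)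
      have "0 \<le> h x" by (rule cone_nonneg[OF hC])
      then show ?thesis using n by simp
    qed
    have "f \<in> ?P"
    proof (rule PiE_I)
      fix x assume x: "x \<in> ?I"
      have "h x \<le> real ?N" by (rule hb_bound[OF vg h])
      then have "nat \<lfloor>h x\<rfloor> \<le> ?N" using hf[of x] by linarith
      then show "f x \<in> {0..?N}" using x unfolding f_def by simp
    next
      fix x assume "x \<notin> ?I" then show "f x = undefined" unfolding f_def by simp
    qed
    moreover have "h = ?F f"
    proof
      fix x show "h x = ?F f x"
        using hf[of x] cone_out[OF hC, of x] unfolding f_def by auto
    qed
    ultimately show "h \<in> ?F ` ?P" by blast
  qed
  have finP: "finite ?P" using finite_coord by (intro finite_PiE) auto
  have cardP: "card ?P = (?N + 1) ^ (7 * t)"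
    by (simp add: card_PiE finite_coord card_coord)
  have "finite ?H" using finite_subset[OF sub] finP by blast
  moreover have "card ?H \<le> t ^ (7 * t) * 2 ^ (49 * t\<^sup>2 + 14 * t)"
  proof -
    have "card ?H \<le> card (?F ` ?P)" by (rule card_mono[OF _ sub]) (use finP in simp)
    also have "\<dots> \<le> card ?P" by (rule card_image_le[OF finP])
    also have "\<dots> = (?N + 1) ^ (7 * t)" by (rule cardP)
    also have "\<dots> \<le> t ^ (7 * t) * 2 ^ (49 * t\<^sup>2 + 14 * t)" by (rule arith_bound)
    finally show ?thesis .
  qed
  ultimately show ?thesis by blast
qed

theorem lemma6p2:
  fixes t :: nat and gl :: gluing
  assumes "is_3manifold_triangulation t gl"
  shows "finite {v. min_vertex_solution (haken_cone t gl) v} \<and>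
         card {v. min_vertex_solution (haken_cone t gl) v} \<le> 2 ^ (7 * t) \<and>
         finite (min_hilbert_basis (haken_cone t gl)) \<and>
         card (min_hilbert_basis (haken_cone t gl)) \<le> t ^ (7 * t) * 2 ^ (49 * t\<^sup>2 + 14 * t)"
proof -
  have vg: "valid_gluing t gl" using assms unfolding is_3manifold_triangulation_def by blast
  show ?thesis using part1[of t gl] part2[OF vg] by blast
qed

end
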